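(* Let $W=L^a(RL)^{k_1}R(RL)^{k_2}R\cdots(RL)^{k_m}RL^b$ be a balanced word, where $a,b,m\ge 0$ are integers with $a+b=m$ and $k_i\ge 0$ for $1\le i\le m$. Then the elevation multiset of $W$ is the multiset union $$E(W)=\{0,-1,\dots,-a\}\cup\{0,1,\dots,b\}\cup\{(i-a)^{\mu_i}\}_{i=0}^m,$$ where the value $i-a$ appears with multiplicity $\mu_i$ in the last part, with $\mu_0=k_1$, $\mu_i=k_i+1+k_{i+1}$ for $1\le i\le m-1$, and $\mu_m=k_m$.
   Context: Words are finite products of the letters $L,R$. A word is balanced if it contains equally many $L$'s and $R$'s. For a balanced word $W=a_1\cdots a_n$ and $0\le k\le n$, $e_k(W)=\sum_{i=1}^k\overline{a_i}$ with $\overline{R}=1$, $\overline{L}=-1$; the elevation multiset $E(W)$ is the multiset $\{e_0(W),\dots,e_n(W)\}$. The notation $x^\mu$ denotes the value $x$ with multiplicity $\mu$, and $\cup$ denotes multiset union (multiplicities add). *)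

theory Defs
  imports Main "HOL-Library.Multiset"
begin

datatype letter = L | R

type_synonym word = "letter list"

definition letter_val :: "letter \<Rightarrow> int" where
  "letter_val a = (case a of R \<Rightarrow> 1 | L \<Rightarrow> -1)"

definition balanced :: "word \<Rightarrow> bool" where
  "balanced W \<longleftrightarrow> count_list W L = count_list W R"

definition elev :: "nat \<Rightarrow> word \<Rightarrow> int" where
  "elev k W = (\<Sum>i<k. letter_val (W ! i))"

definition elev_mset :: "word \<Rightarrow> int multiset" where
  "elev_mset W = mset (map (\<lambda>k. elev k W) [0..<length W + 1])"

end

theory Submission
  imports Defs
begin

fun ms :: "int \<Rightarrow> word \<Rightarrow> int multiset" where
  "ms s [] = {#}"
| "ms s (x # w) = {# s + letter_val x #} + ms (s + letter_val x) w"

definition tot :: "word \<Rightarrow> int" where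
  "tot w = sum_list (map letter_val w)"

lemma ms_append: "ms s (u @ v) = ms s u + ms (s + tot u) v"
  by (induction u arbitrary: s) (auto simp: tot_def add.assoc)

lemma tot_Nil[simp]: "tot [] = 0" by (simp add: tot_def)
lemma tot_Cons[simp]: "tot (x # w) = letter_val x + tot w" by (simp add: tot_def)

lemma tot_append[simp]: "tot (u @ v) = tot u + tot v"
  by (simp add: tot_def)

lemma elev_take: "k \<le> length W \<Longrightarrow> elev k W = tot (take k W)"
proof (induction k)
  case 0 then show ?case by (simp add: elev_def tot_def)
next
  case (Suc k)
  then have "take (Suc k) W = take k W @ [W ! k]" by (simp add: take_Suc_conv_app_nth)
  with Suc show ?case by (simp add: elev_def tot_def)
qed

lemma ms_take: "mset (map (\<lambda>k. s + tot (take k w)) [0..<length w+1]) = {#s#} + ms s w"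
proof (induction w arbitrary: s)
  case Nil then show ?case by (simp add: tot_def)
next
  case (Cons x w)
  have "[0..<length (x#w)+1] = 0 # map Suc [0..<length w + 1]"
    by (simp add: upt_conv_Cons map_Suc_upt del: upt_Suc)
  then have "map (\<lambda>k. s + tot (take k (x#w))) [0..<length (x#w)+1]
     = s # map (\<lambda>k. (s + letter_val x) + tot (take k w)) [0..<length w+1]"
    by (simp only: list.map map_map comp_def take_Suc_Cons tot_Cons take0 tot_Nil add_0_right add.assoc)
  then have "mset (map (\<lambda>k. s + tot (take k (x#w))) [0..<length (x#w)+1])
     = {#s#} + mset (map (\<lambda>k. (s + letter_val x) + tot (take k w)) [0..<length w+1])"
    by (metis mset.simps(2) add_mset_add_single add.commute)
  also have "\<dots> = {#s#} + ({#s + letter_val x#} + ms (s + letter_val x) w)"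
    using Cons by simp
  finally show ?case by simp
qed

lemma elev_mset_ms: "elev_mset W = {#0#} + ms 0 W"
proof -
  have "elev_mset W = mset (map (\<lambda>k. 0 + tot (take k W)) [0..<length W+1])"
    unfolding elev_mset_def
    by (intro arg_cong[where f=mset] map_cong) (auto simp: elev_take)
  then show ?thesis by (simp only: ms_take)
qed

lemma ms_repL: "ms s (replicate a L) = mset (map (\<lambda>j. s - int j) [1..<a+1])"
  and tot_repL: "tot (replicate a L) = - int a"
proof -
  show "tot (replicate a L) = - int a"
    by (induction a) (auto simp: tot_def letter_val_def)
  then show "ms s (replicate a L) = mset (map (\<lambda>j. s - int j) [1..<a+1])"
  proof (induction a)
    case 0 then show ?case by simp
  next
    case (Suc a)
    have t: "tot (replicate a L) = - int a" by (induction a) (auto simp: tot_def letter_val_def)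
    have "replicate (Suc a) L = replicate a L @ [L]" by (simp add: replicate_append_same)
    then have "ms s (replicate (Suc a) L) = ms s (replicate a L) + ms (s - int a) [L]"
      by (simp add: ms_append t)
    then show ?case using Suc t by (simp add: letter_val_def add_ac)
  qed
qed

definition blk :: "nat \<Rightarrow> word" where
  "blk n = concat (replicate n [R, L]) @ [R]"

lemma ms_RL: "ms s (concat (replicate n [R, L])) = replicate_mset n (s+1) + replicate_mset n s"
  and tot_RL: "tot (concat (replicate n [R, L])) = 0"
proof -
  show t: "tot (concat (replicate n [R, L])) = 0"
    by (induction n) (auto simp: letter_val_def)
  show "ms s (concat (replicate n [R, L])) = replicate_mset n (s+1) + replicate_mset n s"
  proof (induction n)
    case 0 then show ?case by simp
  next
    case (Suc n)
    then show ?case by (simp add: ms_append letter_val_def add_ac)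
  qed
qed

lemma ms_blk: "ms s (blk n) = replicate_mset n (s+1) + replicate_mset n s + {#s+1#}"
  and tot_blk: "tot (blk n) = 1"
  by (auto simp: blk_def ms_append ms_RL tot_RL letter_val_def)

lemma ms_blocks:
  "ms s (concat (map (\<lambda>i. blk (k i)) [1..<m+1])) =
     (\<Sum>i\<in>{1..m}. replicate_mset (k i) (s + int i) + replicate_mset (k i) (s + int i - 1) + {#s + int i#})"
  and tot_blocks: "tot (concat (map (\<lambda>i. blk (k i)) [1..<m+1])) = int m"
proof -
  show t: "tot (concat (map (\<lambda>i. blk (k i)) [1..<m+1])) = int m" for m
    by (induction m) (auto simp: tot_blk)
  show "ms s (concat (map (\<lambda>i. blk (k i)) [1..<m+1])) =
     (\<Sum>i\<in>{1..m}. replicate_mset (k i) (s + int i) + replicate_mset (k i) (s + int i - 1) + {#s + int i#})"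
  proof (induction m)
    case 0 then show ?case by simp
  next
    case (Suc m)
    show ?case using Suc t[of m]
      by (simp add: ms_append ms_blk add_ac)
  qed
qed

lemma replicate_mset_distrib: "replicate_mset (a + b) x = replicate_mset a x + replicate_mset b x"
  by (induction a) auto

lemma negs: "mset (map (\<lambda>j. - int j) [0..<a+1]) = {#0#} + mset (map (\<lambda>j. - int j) [1..<a+1])"
  by (simp add: upt_conv_Cons del: upt_Suc)

lemma revb: "mset (map (\<lambda>j. int b - int j) [1..<b+1]) = mset (map int [0..<b])"
proof (induction b)
  case 0 then show ?case by simp
next
  case (Suc b)
  have "[1..<Suc b+1] = 1 # map Suc [1..<b+1]"
    by (simp add: upt_conv_Cons map_Suc_upt del: upt_Suc)
  then have "mset (map (\<lambda>j. int (Suc b) - int j) [1..<Suc b+1])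
      = {#int b#} + mset (map (\<lambda>j. int b - int j) [1..<b+1])"
    by (simp add: comp_def del: upt_Suc)
  also have "\<dots> = mset (map int [0..<Suc b])" using Suc by simp
  finally show ?case .
qed

lemma sumid:
  assumes "m \<ge> 1"
  shows "(\<Sum>i\<in>{1..m}. replicate_mset (k i) (s + int i) + replicate_mset (k i) (s + int i - 1) + {#s + int i#})
   = (\<Sum>i\<in>{0..m}. replicate_mset
               (if i = 0 then k 1 else if i = m then k m else k i + 1 + k (i+1))
               (s + int i)) + {#s + int m#}"
  using assms
proof (induction m rule: dec_induct)
  case base
  then show ?case by (simp add: add_ac)
next
  case (step m)
  let ?f = "\<lambda>m i. replicate_mset
               (if i = 0 then k 1 else if i = m then k m else k i + 1 + k (i+1)) (s + int i)"
  have "(\<Sum>i\<in>{0..Suc m}. ?f (Suc m) i) = (\<Sum>i\<in>{0..<m}. ?f (Suc m) i) + ?f (Suc m) m + ?f (Suc m) (Suc m)"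
    by (simp add: atLeastLessThanSuc_atLeastAtMost[symmetric])
  also have "(\<Sum>i\<in>{0..<m}. ?f (Suc m) i) = (\<Sum>i\<in>{0..<m}. ?f m i)"
    by (rule sum.cong) auto
  finally have 1: "(\<Sum>i\<in>{0..Suc m}. ?f (Suc m) i) = (\<Sum>i\<in>{0..<m}. ?f m i) + ?f (Suc m) m + ?f (Suc m) (Suc m)" .
  have 2: "(\<Sum>i\<in>{0..m}. ?f m i) = (\<Sum>i\<in>{0..<m}. ?f m i) + ?f m m"
    by (simp add: atLeastLessThanSuc_atLeastAtMost[symmetric])
  have 3: "?f m m = replicate_mset (k m) (s + int m)" using step.hyps by simp
  have 4: "?f (Suc m) m = replicate_mset (k m) (s + int m) + {#s + int m#} + replicate_mset (k (Suc m)) (s + int (Suc m) - 1)"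
    using step.hyps by (simp add: replicate_mset_distrib)
  have 5: "?f (Suc m) (Suc m) = replicate_mset (k (Suc m)) (s + int (Suc m))" by simp
  have 6: "(\<Sum>i\<in>{1..Suc m}. replicate_mset (k i) (s + int i) + replicate_mset (k i) (s + int i - 1) + {#s + int i#})
    = (\<Sum>i\<in>{1..m}. replicate_mset (k i) (s + int i) + replicate_mset (k i) (s + int i - 1) + {#s + int i#})
      + (replicate_mset (k (Suc m)) (s + int (Suc m)) + replicate_mset (k (Suc m)) (s + int (Suc m) - 1) + {#s + int (Suc m)#})"
    by (simp add: sum.cl_ivl_Suc)
  show ?case
    unfolding 6 step.IH 1 2 3 4 5 by (simp add: add_ac)
qed

theorem lemma6p5:
  fixes a b m :: nat and k :: "nat \<Rightarrow> nat"
  assumes "m \<ge> 1" and "a + b = m"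
    and "W = replicate a L
             @ concat (map (\<lambda>i. concat (replicate (k i) [R, L]) @ [R]) [1..<m+1])
             @ replicate b L"
    and "balanced W"
  shows "elev_mset W =
           mset (map (\<lambda>j. - int j) [0..<a+1])
         + mset (map int [0..<b+1])
         + (\<Sum>i\<in>{0..m}. replicate_mset
               (if i = 0 then k 1 else if i = m then k m else k i + 1 + k (i+1))
               (int i - int a))"
proof -
  have W: "W = replicate a L @ concat (map (\<lambda>i. blk (k i)) [1..<m+1]) @ replicate b L"
    using assms(3) by (simp add: blk_def)
  have e: "elev_mset W = {#0#} + mset (map (\<lambda>j. 0 - int j) [1..<a+1])
      + (\<Sum>i\<in>{1..m}. replicate_mset (k i) (- int a + int i) + replicate_mset (k i) (- int a + int i - 1) + {#- int a + int i#})
      + mset (map (\<lambda>j. (- int a + int m) - int j) [1..<b+1])"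
    unfolding elev_mset_ms W ms_append ms_repL tot_repL ms_blocks tot_blocks
    by (simp add: add_ac)
  have bm: "- int a + int m = int b" using assms(2) by simp
  have s: "(\<Sum>i\<in>{1..m}. replicate_mset (k i) (- int a + int i) + replicate_mset (k i) (- int a + int i - 1) + {#- int a + int i#})
     = (\<Sum>i\<in>{0..m}. replicate_mset
               (if i = 0 then k 1 else if i = m then k m else k i + 1 + k (i+1))
               (int i - int a)) + {#int b#}"
    using sumid[OF assms(1), of k "- int a"] bm by (simp add: add_ac)
  have n: "mset (map (\<lambda>j. 0 - int j) [1..<a+1]) = mset (map (\<lambda>j. - int j) [1..<a+1])" by simp
  have r: "mset (map int [0..<b+1]) = mset (map int [0..<b]) + {#int b#}" by simp
  show ?thesis
    unfolding e s bm revb negs n r by (simp add: add_ac)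
qed

end
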